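(* Let $d\ge1$, let $\{\zeta_i\}_{i=0}^d$ be any scalars, and let $P(x)=\sum_{i=0}^d\frac{(-1)^i\zeta_ix^i}{([i]^!_q)^2}$ be the corresponding Drinfel'd polynomial. Put $\theta_i=q^{2i-d}$ and $\theta^*_i=q^{d-2i}$ for $0\le i\le d$. Then $$\sum_{i=0}^d\eta_{d-i}(\theta_0)\,\eta^*_{d-i}(\theta^*_0)\,\zeta_i=(-1)^d([d]^!_q)^2(q-q^{-1})^{2d}\,P\!\left(\frac{1}{(q-q^{-1})^2}\right).$$
   Context: $\mathcal K$ is a field; $q\in\mathcal K$ is nonzero and not a root of unity; $[i]_q=\frac{q^i-q^{-i}}{q-q^{-1}}$, $[i]^!_q=\prod_{n=1}^i[n]_q$ ($[0]^!_q=1$). For $0\le i\le d$: $\eta_i(x)=(x-\theta_d)(x-\theta_{d-1})\cdots(x-\theta_{d-i+1})$ and $\eta^*_i(x)=(x-\theta^*_d)(x-\theta^*_{d-1})\cdots(x-\theta^*_{d-i+1})$ (empty product $=1$). *)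

theory Defs
  imports Main
begin

definition qint :: "'a::field \<Rightarrow> nat \<Rightarrow> 'a" where
  "qint q i = (q ^ i - inverse q ^ i) / (q - inverse q)"

definition qfact :: "'a::field \<Rightarrow> nat \<Rightarrow> 'a" where
  "qfact q i = (\<Prod>n=1..i. qint q n)"

definition eta :: "(nat \<Rightarrow> 'a::field) \<Rightarrow> nat \<Rightarrow> nat \<Rightarrow> 'a \<Rightarrow> 'a" where
  "eta th d i x = (\<Prod>k<i. x - th (d - k))"

definition drinfeld_poly :: "'a::field \<Rightarrow> nat \<Rightarrow> (nat \<Rightarrow> 'a) \<Rightarrow> 'a \<Rightarrow> 'a" where
  "drinfeld_poly q d \<zeta> x = (\<Sum>i=0..d. (-1) ^ i * \<zeta> i * x ^ i / (qfact q i) ^ 2)"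

end

theory Submission
  imports Defs
begin

lemma prod_shift_aux:
  fixes f :: "nat \<Rightarrow> 'a::comm_monoid_mult"
  shows "n \<le> d \<Longrightarrow> (\<Prod>k<n. f (d - k)) = prod f {d-n<..d}"
proof (induction n)
  case 0 then show ?case by simp
next
  case (Suc n)
  have e: "{d - Suc n<..d} = insert (d-n) {d-n<..d}" using Suc.prems by auto
  show ?case using Suc by (simp add: e mult.commute)
qed

theorem lemma8p2:
  fixes q :: "'a::field" and d :: nat and \<zeta> :: "nat \<Rightarrow> 'a"
    and \<theta> \<theta>s :: "nat \<Rightarrow> 'a"
  assumes "q \<noteq> 0"
    and "\<And>n. n \<ge> 1 \<Longrightarrow> q ^ n \<noteq> 1"
    and "d \<ge> 1"
    and "\<And>i. i \<le> d \<Longrightarrow> \<theta> i = q powi (2 * int i - int d)"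
    and "\<And>i. i \<le> d \<Longrightarrow> \<theta>s i = q powi (int d - 2 * int i)"
  shows "(\<Sum>i=0..d. eta \<theta> d (d - i) (\<theta> 0) * eta \<theta>s d (d - i) (\<theta>s 0) * \<zeta> i)
       = (-1) ^ d * (qfact q d) ^ 2 * (q - inverse q) ^ (2 * d)
           * drinfeld_poly q d \<zeta> (1 / (q - inverse q) ^ 2)"
proof -
  define c where "c = q - inverse q"
  have q0: "q \<noteq> 0" by fact
  have c0: "c \<noteq> 0"
  proof
    assume "c = 0"
    then have "q * q = 1" using q0 unfolding c_def by (simp add: field_simps)
    then show False using assms(2)[of 2] by (simp add: power2_eq_square)
  qed
  have qi: "c * qint q m = q ^ m - inverse q ^ m" for m
    using c0 unfolding qint_def c_def by simp
  have qi0: "qint q m \<noteq> 0" if "m \<ge> 1" for m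
  proof
    assume "qint q m = 0"
    then have "q ^ m = inverse q ^ m" using qi[of m] by simp
    then have "q ^ m * q ^ m = 1" using q0 by (simp add: power_inverse field_simps)
    then have "q ^ (2*m) = 1" by (simp add: power_add[symmetric] mult_2)
    then show False using assms(2)[of "2*m"] that by simp
  qed
  have th0: "\<theta> 0 = inverse (q ^ d)" using assms(4)[of 0] by (simp add: power_int_minus)
  have ths0: "\<theta>s 0 = q ^ d" using assms(5)[of 0] by simp
  have thmm: "\<theta> m = q ^ (2*m) * inverse (q ^ d)" if "m \<le> d" for m
  proof -
    have "\<theta> m = q powi (int (2*m) - int d)" using assms(4)[OF that] by simp
    also have "\<dots> = q powi int (2*m) / q powi int d" using q0 by (simp add: power_int_diff)
    finally show ?thesis unfolding power_int_of_nat by (simp add: field_simps)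
  qed
  have thsm: "\<theta>s m = q ^ d * inverse (q ^ (2*m))" if "m \<le> d" for m
  proof -
    have "\<theta>s m = q powi (int d - int (2*m))" using assms(5)[OF that] by simp
    also have "\<dots> = q powi int d / q powi int (2*m)" using q0 by (simp add: power_int_diff)
    finally show ?thesis unfolding power_int_of_nat by (simp add: field_simps)
  qed
  have trm: "(\<theta> 0 - \<theta> m) * (\<theta>s 0 - \<theta>s m) = - ((c * qint q m)^2)" if "m \<le> d" for m
  proof -
    have qm: "q ^ m \<noteq> 0" "q ^ d \<noteq> 0" using q0 by auto
    have "(\<theta> 0 - \<theta> m) * (\<theta>s 0 - \<theta>s m)
        = (inverse (q^d) - q^m*q^m * inverse (q^d)) * (q^d - q^d * inverse (q^m*q^m))"
      using th0 ths0 thmm[OF that] thsm[OF that] by (simp add: mult_2 power_add)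
    also have "\<dots> = - ((q ^ m - inverse q ^ m)^2)"
      using qm by (simp add: field_simps power_inverse power2_eq_square)
    finally show ?thesis by (simp add: qi)
  qed
  define R where "R i = prod (qint q) {i<..d}" for i
  have etaeq: "eta \<theta> d (d - i) (\<theta> 0) * eta \<theta>s d (d - i) (\<theta>s 0)
      = (-1)^(d-i) * c^(2*(d-i)) * (R i)^2" if "i \<le> d" for i
  proof -
    have "eta \<theta> d (d - i) (\<theta> 0) * eta \<theta>s d (d - i) (\<theta>s 0)
       = (\<Prod>k<d-i. (\<theta> 0 - \<theta> (d-k)) * (\<theta>s 0 - \<theta>s (d-k)))"
      unfolding eta_def by (simp add: prod.distrib)
    also have "\<dots> = (\<Prod>k<d-i. (\<lambda>m. - ((c * qint q m)^2)) (d-k))"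
      by (rule prod.cong) (auto simp: trm)
    also have "\<dots> = prod (\<lambda>m. - ((c * qint q m)^2)) {i<..d}"
      using prod_shift_aux[of "d-i" d "\<lambda>m. - ((c * qint q m)^2)"] that by simp
    also have "\<dots> = (\<Prod>m\<in>{i<..d}. (-1) * c^2 * (qint q m)^2)"
      by (simp add: power_mult_distrib)
    also have "\<dots> = (-1)^(d-i) * c^(2*(d-i)) * (R i)^2"
      unfolding R_def prod.distrib prod_constant card_greaterThanAtMost
      by (simp add: power_mult prod_power_distrib)
    finally show ?thesis .
  qed
  have fact_split: "qfact q d = qfact q i * R i" if "i \<le> d" for i
  proof -
    have "{1..d} = {1..i} \<union> {i<..d}" using that by auto
    then show ?thesis unfolding qfact_def R_def
      by (simp add: prod.union_disjoint ivl_disj_int)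
  qed
  have fi0: "qfact q i \<noteq> 0" for i
    unfolding qfact_def using qi0 by (simp add: prod_zero_iff)
  show ?thesis
    unfolding drinfeld_poly_def c_def[symmetric] sum_distrib_left
  proof (rule sum.cong[OF refl])
    fix i assume "i \<in> {0..d}"
    then have id: "i \<le> d" by simp
    have s1: "(-1::'a)^d = (-1)^(d-i) * (-1)^i" using id by (simp add: power_add[symmetric])
    have s2: "c^(2*d) = c^(2*(d-i)) * c^(2*i)" unfolding power_add[symmetric] using id
      by (metis add_mult_distrib2 le_add_diff_inverse2)
    show "eta \<theta> d (d - i) (\<theta> 0) * eta \<theta>s d (d - i) (\<theta>s 0) * \<zeta> i =
      (-1) ^ d * qfact q d ^ 2 * c ^ (2 * d) * ((-1) ^ i * \<zeta> i * (1 / c\<^sup>2) ^ i / qfact q i ^ 2)"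
      unfolding etaeq[OF id] fact_split[OF id] s1 s2
      using fi0[of i] c0 by (simp add: field_simps power_mult power_mult_distrib flip: power_mult)
  qed
qed

end
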